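(* In the SODA algorithm described in the context, the communication cost of a successful write operation is at most $5f^2$, i.e., $O(f^2)$.
   Context: System model: asynchronous message passing with writers $\mathcal{W}$, readers $\mathcal{R}$ and $n$ servers ordered $s_1<\dots<s_n$; reliable point-to-point channels between every client and server and every two servers; crash failures only; any number of clients and at most $f$ servers crash, $1\le f\le (n-1)/2$. Coding: values of size 1 unit; an $[n,k]$ MDS code with $k=n-f$, encoder $\Phi$ producing coded elements $\Phi_s(v)$, $s\in\mathcal{S}$, each of size $1/k$. SODA write by writer $w$ of value $v$: (get-tag phase) query all servers for their locally stored tags, wait for a majority of responses, let $t_{max}$ be the largest; (put phase) form tag $t_w=(t_{max}.z+1,w)$ and invoke md-value-send$(t_w,v)$, then wait for acknowledgments from $k$ servers. md-value-send$(t_w,v)$: the writer sends the uncoded $(t_w,v)$ to servers $s_1,\dots,s_{f+1}$ in order; each $s_i$ ($i\le f+1$), on first receipt, sends $(t_w,v)$ to $s_{i+1},\dots,s_{f+1}$, sends $(t_w,\Phi_{s'}(v))$ to every server $s'\notin\{s_1,\dots,s_{f+1}\}$, and delivers $(t_w,\Phi_{s_i}(v))$ locally; each other server delivers the coded element it receives. A server that delivers a coded element stores it if its tag exceeds the stored tag, forwards it to currently registered readers with smaller or equal requested tags (this is accounted to reads), and acknowledges to the writer. Communication cost of an operation: total size of the value/coded-element data carried in all messages sent as part of the operation, normalized by the value size; metadata (tags, ids, acknowledgments) is ignored. *)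

theory Defs
  imports Complex_Main
begin

text \<open>Nodes involved in the put phase of a SODA write: the writer and the
servers s_1, ..., s_n (server s_i is represented as Srv i).\<close>
datatype node = Writer | Srv nat

datatype payload = Uncoded | Coded

type_synonym message = "node \<times> node \<times> payload"

text \<open>All data-carrying messages that md-value-send(t_w, v) may send (each at
most once, since servers forward only on first receipt):
 writer -> s_1..s_{f+1} uncoded;
 s_i (i \<le> f+1) -> s_{i+1}..s_{f+1} uncoded;
 s_i (i \<le> f+1) -> every s' not in {s_1..s_{f+1}} a coded element.
Local delivery is not a message; acknowledgments/tags carry no data; the
forwarding to readers is accounted to reads.\<close>
definition md_value_send_msgs :: "nat \<Rightarrow> nat \<Rightarrow> message set" where
  "md_value_send_msgs n f =
     {(Writer, Srv j, Uncoded) | j. 1 \<le> j \<and> j \<le> f + 1}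
   \<union> {(Srv i, Srv j, Uncoded) | i j. 1 \<le> i \<and> i < j \<and> j \<le> f + 1}
   \<union> {(Srv i, Srv j, Coded) | i j. 1 \<le> i \<and> i \<le> f + 1 \<and> f + 1 < j \<and> j \<le> n}"

text \<open>Size of a message's data, normalized by the value size: the value has
size 1, a coded element of the [n, k] MDS code with k = n - f has size 1/k.\<close>
fun msg_size :: "nat \<Rightarrow> nat \<Rightarrow> message \<Rightarrow> real" where
  "msg_size n f (_, _, Uncoded) = 1"
| "msg_size n f (_, _, Coded) = 1 / real (n - f)"

text \<open>Communication cost of a write whose put phase actually sent the set M
of data messages (the get-tag phase carries only metadata).\<close>
definition write_comm_cost :: "nat \<Rightarrow> nat \<Rightarrow> message set \<Rightarrow> real" where
  "write_comm_cost n f M = (\<Sum>m\<in>M. msg_size n f m)"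

end

theory Submission
  imports Defs
begin

lemma gsum: "2 * (\<Sum>j\<in>{1..m::nat}. j - 1) = m * (m - 1)"
proof (induction m)
  case (Suc m)
  have "{1..Suc m} = insert (Suc m) {1..m}" by auto
  then have "(\<Sum>j\<in>{1..Suc m}. j - 1) = m + (\<Sum>j\<in>{1..m}. j - 1)" by simp
  then show ?case using Suc by (cases m) (auto simp: algebra_simps)
qed simp

lemma pairs_card: "card {(i,j). 1 \<le> i \<and> i < j \<and> j \<le> (m::nat)} \<le> (\<Sum>j\<in>{1..m}. j - 1)"
proof -
  have eq: "{(i,j). 1 \<le> i \<and> i < j \<and> j \<le> m} = (\<lambda>(j,i). (i,j)) ` Sigma {1..m} (\<lambda>j. {1..<j})"
    by (auto simp: image_iff)
  have "card {(i,j). 1 \<le> i \<and> i < j \<and> j \<le> m} \<le> card (Sigma {1..m} (\<lambda>j. {1..<j}))"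
    unfolding eq by (rule card_image_le) simp
  also have "\<dots> = (\<Sum>j\<in>{1..m}. j - 1)" by (simp add: card_SigmaI)
  finally show ?thesis .
qed

theorem theorem6:
  fixes n f :: nat and M :: "message set"
  assumes "1 \<le> f" and "2 * f + 1 \<le> n"
    and "M \<subseteq> md_value_send_msgs n f"
  shows "write_comm_cost n f M \<le> 5 * real f ^ 2"
proof -
  define U1 where "U1 = (\<lambda>j. (Writer, Srv j, Uncoded)) ` {1..f+1}"
  define P where "P = {(i,j). 1 \<le> i \<and> i < j \<and> j \<le> f+1}"
  define U2 where "U2 = (\<lambda>(i,j). (Srv i, Srv j, Uncoded)) ` P"
  define C where "C = (\<lambda>(i,j). (Srv i, Srv j, Coded)) ` ({1..f+1} \<times> {f+2..n})"
  have Peq: "P \<subseteq> {1..f+1} \<times> {1..f+1}" by (auto simp: P_def)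
  have finP: "finite P" using Peq finite_subset by blast
  have sub: "md_value_send_msgs n f = U1 \<union> U2 \<union> C"
    unfolding md_value_send_msgs_def U1_def U2_def C_def P_def by (auto simp: image_iff)
  have finM: "finite M" using assms(3) sub finP by (auto simp: U1_def U2_def C_def intro: finite_subset)
  define MU where "MU = M \<inter> (U1 \<union> U2)"
  define MC where "MC = M \<inter> C"
  have disj: "MU \<inter> MC = {}" by (auto simp: MU_def MC_def U1_def U2_def C_def)
  have Meq: "M = MU \<union> MC" using assms(3) sub by (auto simp: MU_def MC_def)
  have cost: "write_comm_cost n f M = (\<Sum>m\<in>MU. msg_size n f m) + (\<Sum>m\<in>MC. msg_size n f m)"
    unfolding write_comm_cost_def using finM disj Meq
    by (metis finite_Un sum.union_disjoint)
  have "(\<Sum>m\<in>MU. msg_size n f m) = (\<Sum>m\<in>MU. 1)"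
    by (rule sum.cong) (auto simp: MU_def U1_def U2_def)
  then have sU: "(\<Sum>m\<in>MU. msg_size n f m) = real (card MU)" by simp
  have "(\<Sum>m\<in>MC. msg_size n f m) = (\<Sum>m\<in>MC. 1 / real (n - f))"
    by (rule sum.cong) (auto simp: MC_def C_def)
  then have sC: "(\<Sum>m\<in>MC. msg_size n f m) = real (card MC) / real (n - f)" by simp
  have cU1: "card U1 \<le> f + 1" unfolding U1_def using card_image_le[of "{1..f+1}"] by simp
  have cU2: "card U2 \<le> card P" unfolding U2_def using finP card_image_le by blast
  have cP: "2 * card P \<le> (f+1) * f"
    using pairs_card[of "f+1"] gsum[of "f+1"] unfolding P_def by simp
  have cC: "card C \<le> (f+1) * (n - f - 1)"
    unfolding C_def using card_image_le[of "{1..f+1} \<times> {f+2..n}"] by simp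
  have finU: "finite (U1 \<union> U2)" using finP by (simp add: U1_def U2_def)
  have finC: "finite C" by (simp add: C_def)
  have "card MU \<le> card (U1 \<union> U2)" unfolding MU_def using finU by (simp add: card_mono)
  also have "\<dots> \<le> card U1 + card U2" by (rule card_Un_le)
  finally have MU0: "card MU \<le> card U1 + card U2" .
  have MUb: "2 * card MU \<le> 2 * (f+1) + (f+1) * f" proof -
    have L: "\<And>a b c d q. a \<le> b + c \<Longrightarrow> b \<le> f+1 \<Longrightarrow> c \<le> d \<Longrightarrow> 2*d \<le> (q::nat) \<Longrightarrow> 2*a \<le> 2*(f+1) + q" by presburger
    show ?thesis by (rule L[OF MU0 cU1 cU2 cP])
  qed
  have "card MC \<le> card C" unfolding MC_def using finC by (simp add: card_mono)
  then have MCb: "card MC \<le> (f+1) * (n - f - 1)" using cC by linarith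
  have nf: "n - f \<ge> 1" using assms by simp
  have "real (card MC) \<le> real (f+1) * real (n - f)"
  proof -
    have "(f+1) * (n - f - 1) \<le> (f+1) * (n - f)" by (rule mult_le_mono2) simp
    then show ?thesis using MCb by (metis le_trans of_nat_le_iff of_nat_mult)
  qed
  then have C2: "real (card MC) / real (n - f) \<le> real (f+1)"
  proof -
    have p: "real (n - f) > 0" using nf by simp
    show ?thesis using \<open>real (card MC) \<le> real (f+1) * real (n - f)\<close> p
      by (subst pos_divide_le_eq[OF p]) simp
  qed
  have U2r: "2 * real (card MU) \<le> 2 * (real f+1) + (real f+1) * real f"
  proof -
    have "real (2 * card MU) \<le> real (2 * (f+1) + (f+1) * f)" using MUb by (simp only: of_nat_le_iff)
    then show ?thesis by (simp add: algebra_simps)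
  qed
  have ff: "real f \<ge> 1" using assms by simp
  have "write_comm_cost n f M \<le> real (card MU) + real (f + 1)" using cost sU sC C2 by simp
  also have "\<dots> \<le> 5 * real f ^ 2" 
  proof -
    have "0 \<le> (real f - 1) * (9 * real f + 4)" using ff by simp
    then show ?thesis using U2r by (simp add: power2_eq_square algebra_simps)
  qed
  finally show ?thesis .
qed

end
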